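(* Let $K\ge1$, fix $a_2,\dots,a_{K+1}\ge0$, and for $x\ge0$ let $G(x)=P^{(1)}_{K+1}(x,a_2,\dots,a_{K+1})$. Let $\mathcal A_\theta$ be an $L$-layer MinAgg GNN with exactly $K$ message passing layers $\ell_1<\dots<\ell_K$ and with 1-dimensional aggregation. Let $D$ be the set of all $x\ge0$ such that $\mathcal A_\theta$ is not path derived on $G(x)$, and $Y=\{h^{(L)}_{v_{K+1}}(G(x)):x\in D\}$. Then $|Y|\le K$.
   Context: Attributed graphs have nonnegative edge weights and node features, a self-loop of weight $0$ at each node, and $\mathcal N(v)=\{v\}\cup\{u:\{u,v\}\in E\}$. A large constant $\beta>0$ encodes "infinite distance". For a source $s$, $\mathrm d^{(t)}(s,v)$ is the minimal weight of a walk from $s$ to $v$ with at most $t$ edges ($\beta$ if none). $P^{(t)}_k(a_1,\dots,a_k)$: path $v_0,\dots,v_k$, edge $\{v_{i-1},v_i\}$ of weight $a_i$, features $x_{v_i}=\mathrm d^{(t)}(v_0,v_i)$. MinAgg GNN: for each $\ell\in[L]$, $m$-layer ReLU MLPs ($x^{(j)}=\sigma(W_jx^{(j-1)}+b_j)$) $f^{\mathrm{agg},(\ell)}:\mathbb R^{d_{\ell-1}+1}\to\mathbb R^d$ and $f^{\mathrm{up},(\ell)}:\mathbb R^{d+d_{\ell-1}}\to\mathbb R^{d_\ell}$ with weight matrices $W^{\mathrm{agg},(\ell)}_j$, $W^{\mathrm{up},(\ell)}_j$; $d_0=d_L=1$, $d_\ell=d$ otherwise; $h^{(0)}_v=x_v$,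 $h^{(\ell)}_v=f^{\mathrm{up},(\ell)}\big(\min_{u\in\mathcal N(v)}f^{\mathrm{agg},(\ell)}(h^{(\ell-1)}_u\oplus x_{(u,v)})\oplus h^{(\ell-1)}_v\big)$ (coordinatewise min, $\oplus$ concatenation). A function on $\mathbb R^n_{\ge0}$ depends on a set $S$ of coordinates if some $x\ne y$ agreeing outside $S$ have different images; layer $\ell$ is message passing if $f^{\mathrm{agg},(\ell)}$ depends on its node component (first $d_{\ell-1}$ input coordinates). $\mathcal A_\theta$ has 1-dimensional aggregation if for every message passing layer $\ell_k$ the first weight matrix $W^{\mathrm{up},(\ell_k)}_1$ of $f^{\mathrm{up},(\ell_k)}$ has exactly one nonzero entry. $\mathcal A_\theta$ is path derived on $P^{(1)}_{K+1}(a_1,\dots,a_{K+1})$ if for every $k\in[K]$, $$h^{(\ell_k)}_{v_{k+1}}=f^{\mathrm{up},(\ell_k)}\Big(f^{\mathrm{agg},(\ell_k)}\big(h^{(\ell_k-1)}_{v_k}\oplus x_{(v_k,v_{k+1})}\big)\oplus h^{(\ell_k-1)}_{v_{k+1}}\Big).$$ *)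

theory Defs
  imports Complex_Main
begin

text \<open>An undirected graph is given by a set of 2-element edges E; edge weights are a function
  on edges; every node additionally carries a self-loop of weight 0.\<close>

definition nbhd :: "'v set set \<Rightarrow> 'v \<Rightarrow> 'v set" where
  "nbhd E v = {v} \<union> {u. {u, v} \<in> E}"

definition ef :: "('v set \<Rightarrow> real) \<Rightarrow> 'v \<Rightarrow> 'v \<Rightarrow> real" where
  "ef w u v = (if u = v then 0 else w {u, v})"

definition walks :: "'v set set \<Rightarrow> nat \<Rightarrow> 'v \<Rightarrow> 'v \<Rightarrow> 'v list set" where
  "walks E t s v = {vs. vs \<noteq> [] \<and> hd vs = s \<and> last vs = v \<and> length vs \<le> t + 1 \<and>
      (\<forall>i. Suc i < length vs \<longrightarrow> vs ! Suc i \<in> nbhd E (vs ! i))}"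

definition walk_weight :: "('v set \<Rightarrow> real) \<Rightarrow> 'v list \<Rightarrow> real" where
  "walk_weight w vs = (\<Sum>i < length vs - 1. ef w (vs ! i) (vs ! Suc i))"

text \<open>d^(t)(s,v), with beta encoding infinite distance\<close>
definition dist_t :: "real \<Rightarrow> 'v set set \<Rightarrow> ('v set \<Rightarrow> real) \<Rightarrow> nat \<Rightarrow> 'v \<Rightarrow> 'v \<Rightarrow> real" where
  "dist_t \<beta> E w t s v =
     (if walks E t s v = {} then \<beta> else Inf (walk_weight w ` walks E t s v))"

text \<open>Nodes v_0,...,v_(K+1) are the naturals 0..K+1; edge {i-1,i} has weight a i.\<close>
definition path_E :: "nat \<Rightarrow> nat set set" where
  "path_E K = {{i - 1, i} | i. i \<in> {1..K+1}}"

definition path_w :: "(nat \<Rightarrow> real) \<Rightarrow> nat set \<Rightarrow> real" where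
  "path_w a e = a (Max e)"

definition path_feat :: "real \<Rightarrow> nat \<Rightarrow> (nat \<Rightarrow> real) \<Rightarrow> nat \<Rightarrow> real" where
  "path_feat \<beta> K a i = dist_t \<beta> (path_E K) (path_w a) 1 0 i"

type_synonym layer = "real list list \<times> real list"  \<comment> \<open>(W, b), W given by its rows\<close>

definition relu :: "real \<Rightarrow> real" where "relu r = max 0 r"

definition mat_vec :: "real list list \<Rightarrow> real list \<Rightarrow> real list" where
  "mat_vec W x = map (\<lambda>row. \<Sum>j < length x. row ! j * x ! j) W"

fun mlp_apply :: "layer list \<Rightarrow> real list \<Rightarrow> real list" where
  "mlp_apply [] x = x"
| "mlp_apply ((W, b) # Ls) x = mlp_apply Ls (map relu (map2 (+) (mat_vec W x) b))"

fun mlp_wf :: "nat \<Rightarrow> nat \<Rightarrow> layer list \<Rightarrow> bool" where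
  "mlp_wf nin nout [] = (nin = nout)"
| "mlp_wf nin nout ((W, b) # Ls) =
     (length b = length W \<and> (\<forall>r \<in> set W. length r = nin) \<and> mlp_wf (length W) nout Ls)"

text \<open>A GNN is a list of L layers (f_agg, f_up), layer l being the (l-1)-th list entry.\<close>
type_synonym gnn = "(layer list \<times> layer list) list"

definition dim :: "nat \<Rightarrow> nat \<Rightarrow> nat \<Rightarrow> nat" where
  "dim L d l = (if l = 0 \<or> l = L then 1 else d)"

definition gnn_wf :: "nat \<Rightarrow> nat \<Rightarrow> nat \<Rightarrow> gnn \<Rightarrow> bool" where
  "gnn_wf m d L \<theta> \<longleftrightarrow> length \<theta> = L \<and>
     (\<forall>l \<in> {1..L}. length (fst (\<theta> ! (l - 1))) = m \<and> length (snd (\<theta> ! (l - 1))) = m \<and>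
        mlp_wf (dim L d (l - 1) + 1) d (fst (\<theta> ! (l - 1))) \<and>
        mlp_wf (d + dim L d (l - 1)) (dim L d l) (snd (\<theta> ! (l - 1))))"

definition agg :: "gnn \<Rightarrow> nat \<Rightarrow> layer list" where "agg \<theta> l = fst (\<theta> ! (l - 1))"
definition upd :: "gnn \<Rightarrow> nat \<Rightarrow> layer list" where "upd \<theta> l = snd (\<theta> ! (l - 1))"

definition cmin :: "nat \<Rightarrow> 'v set \<Rightarrow> ('v \<Rightarrow> real list) \<Rightarrow> real list" where
  "cmin d S f = map (\<lambda>i. Min ((\<lambda>u. f u ! i) ` S)) [0..<d]"

fun hid :: "gnn \<Rightarrow> nat \<Rightarrow> 'v set set \<Rightarrow> ('v set \<Rightarrow> real) \<Rightarrow> ('v \<Rightarrow> real) \<Rightarrow> nat \<Rightarrow> 'v \<Rightarrow> real list" where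
  "hid \<theta> d E w x 0 v = [x v]"
| "hid \<theta> d E w x (Suc l) v =
     mlp_apply (upd \<theta> (Suc l))
       (cmin d (nbhd E v) (\<lambda>u. mlp_apply (agg \<theta> (Suc l)) (hid \<theta> d E w x l u @ [ef w u v]))
        @ hid \<theta> d E w x l v)"

definition depends_on :: "nat \<Rightarrow> (real list \<Rightarrow> real list) \<Rightarrow> nat set \<Rightarrow> bool" where
  "depends_on n f S \<longleftrightarrow> (\<exists>x y. length x = n \<and> length y = n \<and> (\<forall>i<n. 0 \<le> x ! i \<and> 0 \<le> y ! i) \<and>
      x \<noteq> y \<and> (\<forall>i<n. i \<notin> S \<longrightarrow> x ! i = y ! i) \<and> f x \<noteq> f y)"

definition message_passing :: "nat \<Rightarrow> nat \<Rightarrow> gnn \<Rightarrow> nat \<Rightarrow> bool" where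
  "message_passing d L \<theta> l \<longleftrightarrow>
     depends_on (dim L d (l - 1) + 1) (mlp_apply (agg \<theta> l)) {0..<dim L d (l - 1)}"

definition one_nonzero :: "real list list \<Rightarrow> bool" where
  "one_nonzero W \<longleftrightarrow> card {(i, j). i < length W \<and> j < length (W ! i) \<and> W ! i ! j \<noteq> 0} = 1"

definition one_dim_aggregation :: "nat \<Rightarrow> nat \<Rightarrow> gnn \<Rightarrow> bool" where
  "one_dim_aggregation d L \<theta> \<longleftrightarrow>
     (\<forall>l \<in> {1..L}. message_passing d L \<theta> l \<longrightarrow> one_nonzero (fst (hd (upd \<theta> l))))"

definition path_derived ::
  "gnn \<Rightarrow> nat \<Rightarrow> nat \<Rightarrow> (nat \<Rightarrow> nat) \<Rightarrow> nat set set \<Rightarrow> (nat set \<Rightarrow> real) \<Rightarrow> (nat \<Rightarrow> real) \<Rightarrow> bool" where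
  "path_derived \<theta> d K ls E w x \<longleftrightarrow>
     (\<forall>k \<in> {1..K}. hid \<theta> d E w x (ls k) (k + 1) =
        mlp_apply (upd \<theta> (ls k))
          (mlp_apply (agg \<theta> (ls k)) (hid \<theta> d E w x (ls k - 1) k @ [ef w k (k + 1)])
           @ hid \<theta> d E w x (ls k - 1) (k + 1)))"

end

theory Submission
  imports Defs
begin


lemma mlp_len: "mlp_wf n nout Ls \<Longrightarrow> length v = n \<Longrightarrow> length (mlp_apply Ls v) = nout"
proof (induction Ls arbitrary: n v)
  case Nil thus ?case by simp
next
  case (Cons La Ls)
  obtain W b where La: "La = (W, b)" by fastforce
  show ?case using Cons.prems Cons.IH[of "length W"] by (auto simp: La mat_vec_def)
qed

lemma mlp_nonneg_pres: "\<forall>i<length v. 0 \<le> v!i \<Longrightarrow> i < length (mlp_apply Ls v) \<Longrightarrow> 0 \<le> mlp_apply Ls v ! i"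
proof (induction Ls arbitrary: v)
  case Nil thus ?case by simp
next
  case (Cons La Ls)
  obtain W b where La: "La = (W, b)" by fastforce
  show ?case using Cons.prems Cons.IH by (auto simp: La relu_def)
qed

lemma mlp_nonneg: "Ls \<noteq> [] \<Longrightarrow> i < length (mlp_apply Ls v) \<Longrightarrow> 0 \<le> mlp_apply Ls v ! i"
proof -
  assume "Ls \<noteq> []" and i: "i < length (mlp_apply Ls v)"
  then obtain W b Ls' where Ls: "Ls = (W, b) # Ls'" by (metis list.exhaust surj_pair)
  show ?thesis using i mlp_nonneg_pres[of "map relu (map2 (+) (mat_vec W v) b)" i Ls']
    by (auto simp: Ls relu_def)
qed

lemma mlp_onecoord_ex:
  assumes "one_nonzero (fst (hd Ls))" "mlp_wf n nout Ls" "Ls \<noteq> []"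
  shows "\<exists>c<n. \<forall>v v'. length v = n \<longrightarrow> length v' = n \<longrightarrow> v!c = v'!c \<longrightarrow> mlp_apply Ls v = mlp_apply Ls v'"
proof -
  obtain W b Ls' where Ls: "Ls = (W, b) # Ls'" using assms(3) by (metis list.exhaust surj_pair)
  let ?S = "{(i, j). i < length W \<and> j < length (W ! i) \<and> W ! i ! j \<noteq> 0}"
  have "card ?S = 1" using assms(1) by (simp add: Ls one_nonzero_def)
  then obtain p where "?S = {p}" by (rule card_1_singletonE)
  moreover obtain r c where "p = (r, c)" by fastforce
  ultimately have S: "?S = {(r, c)}" by simp
  have rows: "\<forall>row\<in>set W. length row = n" using assms(2) by (simp add: Ls)
  have rc: "r < length W" "c < length (W ! r)" using S by auto
  hence cn: "c < n" using rows by (metis nth_mem)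
  have zero: "W ! i ! j = 0" if "i < length W" "j < n" "(i, j) \<noteq> (r, c)" for i j
  proof (rule ccontr)
    assume "W ! i ! j \<noteq> 0"
    moreover have "j < length (W ! i)" using rows that by (metis nth_mem)
    ultimately have "(i, j) \<in> ?S" using that by auto
    thus False using S that by auto
  qed
  have mv: "mat_vec W v = mat_vec W v'" if "length v = n" "length v' = n" "v!c = v'!c" for v v'
  proof (rule nth_equalityI)
    show "length (mat_vec W v) = length (mat_vec W v')" by (simp add: mat_vec_def)
    fix i assume "i < length (mat_vec W v)"
    hence i: "i < length W" by (simp add: mat_vec_def)
    have "(\<Sum>j < n. W ! i ! j * v ! j) = (\<Sum>j < n. W ! i ! j * v' ! j)"
    proof (rule sum.cong)
      fix j assume "j \<in> {..<n}"
      thus "W ! i ! j * v ! j = W ! i ! j * v' ! j"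
        using zero[OF i, of j] that(3) by (cases "(i, j) = (r, c)") auto
    qed simp
    thus "mat_vec W v ! i = mat_vec W v' ! i" using i that by (simp add: mat_vec_def)
  qed
  show ?thesis
  proof (intro exI[of _ c] conjI allI impI)
    fix v v' :: "real list" assume "length v = n" "length v' = n" "v!c = v'!c"
    thus "mlp_apply Ls v = mlp_apply Ls v'" using mv[of v v'] by (simp add: Ls)
  qed (rule cn)
qed



locale gsetup =
  fixes K L m d :: nat and \<beta> :: real and a :: "nat \<Rightarrow> real" and \<theta> :: gnn
    and ls :: "nat \<Rightarrow> nat"
  assumes K1: "K \<ge> 1" and beta: "\<beta> > 0" and m1: "m \<ge> 1"
    and apos: "\<forall>i \<in> {2..K+1}. a i \<ge> 0"
    and wf: "gnn_wf m d L \<theta>"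
    and smono: "strict_mono_on {1..K} ls"
    and img: "ls ` {1..K} = {l \<in> {1..L}. message_passing d L \<theta> l}"
    and oda: "one_dim_aggregation d L \<theta>"
begin

definition "gE = path_E K"
definition "gw x = path_w (a(1 := x))"
definition "gf x = path_feat \<beta> K (a(1 := x))"
definition "H x l v = hid \<theta> d gE (gw x) (gf x) l v"

lemma H_Suc: "H x (Suc l) v = mlp_apply (upd \<theta> (Suc l))
   (cmin d (nbhd gE v) (\<lambda>u. mlp_apply (agg \<theta> (Suc l)) (H x l u @ [ef (gw x) u v])) @ H x l v)"
  by (simp add: H_def)

lemma H_0: "H x 0 v = [gf x v]" by (simp add: H_def)

lemma edge_iff: "{u, v} \<in> path_E K \<longleftrightarrow> (Suc u = v \<and> v \<le> K+1) \<or> (Suc v = u \<and> u \<le> K+1)"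
  unfolding path_E_def
proof
  assume "{u, v} \<in> {{i - 1, i} |i. i \<in> {1..K + 1}}"
  then obtain i where "{u, v} = {i - 1, i}" "i \<in> {1..K+1}" by blast
  thus "(Suc u = v \<and> v \<le> K+1) \<or> (Suc v = u \<and> u \<le> K+1)" by (auto simp: doubleton_eq_iff)
next
  assume "(Suc u = v \<and> v \<le> K+1) \<or> (Suc v = u \<and> u \<le> K+1)"
  thus "{u, v} \<in> {{i - 1, i} |i. i \<in> {1..K + 1}}"
  proof
    assume h: "Suc u = v \<and> v \<le> K+1"
    hence "{u, v} = {v - 1, v} \<and> v \<in> {1..K+1}" by auto
    thus ?thesis by blast
  next
    assume h: "Suc v = u \<and> u \<le> K+1"
    hence "{u, v} = {u - 1, u} \<and> u \<in> {1..K+1}" by auto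
    thus ?thesis by blast
  qed
qed

lemma nbhd_iff: "u \<in> nbhd gE v \<longleftrightarrow> u = v \<or> (Suc u = v \<and> v \<le> K+1) \<or> (Suc v = u \<and> u \<le> K+1)"
  using edge_iff[of u v] by (auto simp: nbhd_def gE_def)

lemma nbhd_fin: "finite (nbhd gE v)"
proof (rule finite_subset)
  show "nbhd gE v \<subseteq> {..Suc v}" by (auto simp: nbhd_iff)
qed simp

lemma ef_eq: "ef (gw x) u v = (if u = v then 0 else (a(1 := x)) (max u v))"
  by (simp add: ef_def gw_def path_w_def)

lemma ef_indep: "max u v \<ge> 2 \<Longrightarrow> ef (gw x) u v = ef (gw x') u v"
  by (simp add: ef_eq)

lemma ef_nonneg: "x \<ge> 0 \<Longrightarrow> u \<in> nbhd gE v \<or> v \<in> nbhd gE u \<Longrightarrow> 0 \<le> ef (gw x) u v"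
  using apos unfolding ef_eq nbhd_iff by (auto simp: max_def)

lemma walks_empty: "j \<ge> 2 \<Longrightarrow> walks (path_E K) 1 0 j = {}"
proof (rule ccontr)
  assume j: "j \<ge> 2" and "walks (path_E K) 1 0 j \<noteq> {}"
  then obtain vs where vs: "vs \<noteq> []" "hd vs = 0" "last vs = j" "length vs \<le> 2"
    "\<forall>i. Suc i < length vs \<longrightarrow> vs ! Suc i \<in> nbhd (path_E K) (vs ! i)"
    unfolding walks_def by auto
  show False
  proof (cases "length vs = 1")
    case True
    then obtain z where "vs = [z]" by (metis One_nat_def length_0_conv length_Suc_conv)
    thus False using vs j by simp
  next
    case False
    have "length vs > 0" using vs(1) by simp
    hence l2: "length vs = 2" using vs(4) False by linarith
    then obtain p q where "vs = [p, q]" by (metis (no_types, opaque_lifting) Suc_length_conv length_0_conv numeral_2_eq_2)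
    hence "p = 0" "q = j" "q \<in> nbhd gE p" using vs by (auto simp: gE_def)
    thus False using j by (auto simp: nbhd_iff)
  qed
qed

lemma gf_big: "j \<ge> 2 \<Longrightarrow> gf x j = \<beta>"
  using walks_empty by (simp add: gf_def path_feat_def dist_t_def)

lemma gf_nonneg: assumes x: "x \<ge> 0" shows "gf x j \<ge> 0"
proof (cases "walks (path_E K) 1 0 j = {}")
  case True thus ?thesis using beta by (simp add: gf_def path_feat_def dist_t_def)
next
  case False
  have "0 \<le> walk_weight (gw x) vs" if "vs \<in> walks (path_E K) 1 0 j" for vs
    unfolding walk_weight_def
  proof (rule sum_nonneg)
    fix i assume "i \<in> {..<length vs - 1}"
    hence "Suc i < length vs" by auto
    hence "vs ! Suc i \<in> nbhd gE (vs ! i)" using that by (auto simp: walks_def gE_def)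
    thus "0 \<le> ef (gw x) (vs ! i) (vs ! Suc i)" using ef_nonneg x by blast
  qed
  hence "0 \<le> Inf (walk_weight (gw x) ` walks (path_E K) 1 0 j)"
    using False by (intro cInf_greatest) auto
  thus ?thesis using False by (simp add: gf_def path_feat_def dist_t_def gw_def)
qed

lemma wf_at: "l \<in> {1..L} \<Longrightarrow> length (agg \<theta> l) = m \<and> length (upd \<theta> l) = m \<and>
   mlp_wf (dim L d (l-1) + 1) d (agg \<theta> l) \<and> mlp_wf (d + dim L d (l-1)) (dim L d l) (upd \<theta> l)"
  using wf by (simp add: gnn_wf_def agg_def upd_def)

lemma cmin_len[simp]: "length (cmin d S f) = d" by (simp add: cmin_def)

lemma H_len: "l \<le> L \<Longrightarrow> length (H x l v) = dim L d l"
proof (induction l arbitrary: v)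
  case 0 thus ?case by (simp add: H_0 dim_def)
next
  case (Suc l)
  have w: "mlp_wf (d + dim L d l) (dim L d (Suc l)) (upd \<theta> (Suc l))" using wf_at[of "Suc l"] Suc.prems by simp
  show ?case unfolding H_Suc by (rule mlp_len[OF w]) (use Suc in simp)
qed

lemma H_nonneg: "x \<ge> 0 \<Longrightarrow> l \<le> L \<Longrightarrow> i < length (H x l v) \<Longrightarrow> 0 \<le> H x l v ! i"
proof (cases l)
  case 0
  assume "x \<ge> 0" "i < length (H x l v)"
  thus ?thesis using 0 gf_nonneg by (simp add: H_0)
next
  case (Suc l')
  assume "l \<le> L" "i < length (H x l v)"
  moreover have "upd \<theta> (Suc l') \<noteq> []" using wf_at[of "Suc l'"] m1 Suc \<open>l \<le> L\<close> by auto
  ultimately show ?thesis unfolding Suc H_Suc by (intro mlp_nonneg) (auto simp: Suc H_Suc)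
qed

end

context gsetup begin

lemma nonmp_agg:
  assumes l: "l \<in> {1..L}" and nmp: "\<not> message_passing d L \<theta> l"
    and lp: "length p = dim L d (l-1)" and lq: "length q = dim L d (l-1)"
    and np: "\<forall>i<length p. 0 \<le> p!i" and nq: "\<forall>i<length q. 0 \<le> q!i" and e: "0 \<le> e"
  shows "mlp_apply (agg \<theta> l) (p@[e]) = mlp_apply (agg \<theta> l) (q@[e])"
proof (rule ccontr)
  assume neq: "mlp_apply (agg \<theta> l) (p@[e]) \<noteq> mlp_apply (agg \<theta> l) (q@[e])"
  let ?n = "dim L d (l-1)"
  have "depends_on (?n + 1) (mlp_apply (agg \<theta> l)) {0..<?n}"
  proof -
    have A: "\<forall>i<?n+1. 0 \<le> (p@[e])!i \<and> 0 \<le> (q@[e])!i" using np nq e lp lq by (auto simp: nth_append)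
    have B: "\<forall>i<?n+1. i \<notin> {0..<?n} \<longrightarrow> (p@[e])!i = (q@[e])!i" using lp lq by (auto simp: nth_append)
    have C: "p @ [e] \<noteq> q @ [e]" using neq by metis
    show ?thesis unfolding depends_on_def
      apply (rule exI[of _ "p@[e]"], rule exI[of _ "q@[e]"])
      using A B C neq lp lq by auto
  qed
  thus False using nmp by (simp add: message_passing_def)
qed

definition "cnt l = card {k\<in>{1..K}. ls k \<le> l}"

lemma ls_range: "k \<in> {1..K} \<Longrightarrow> ls k \<in> {1..L} \<and> message_passing d L \<theta> (ls k)"
  using img by blast

lemma mp_iff: "l \<in> {1..L} \<Longrightarrow> message_passing d L \<theta> l \<longleftrightarrow> l \<in> ls ` {1..K}"
  using img by blast

lemma ls_less: "k \<in> {1..K} \<Longrightarrow> k' \<in> {1..K} \<Longrightarrow> ls k < ls k' \<longleftrightarrow> k < k'"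
  using strict_mono_on_less[OF smono] by blast

lemma ls_le: "k \<in> {1..K} \<Longrightarrow> k' \<in> {1..K} \<Longrightarrow> ls k \<le> ls k' \<longleftrightarrow> k \<le> k'"
  using strict_mono_on_less_eq[OF smono] by blast

lemma cnt_ls_pred: assumes k: "k \<in> {1..K}" shows "cnt (ls k - 1) = k - 1"
proof -
  have "ls k \<ge> 1" using ls_range[OF k] by simp
  hence "{k'\<in>{1..K}. ls k' \<le> ls k - 1} = {k'\<in>{1..K}. ls k' < ls k}" by auto
  also have "\<dots> = {1..k-1}" using ls_less[OF _ k] k by auto
  finally show ?thesis by (simp add: cnt_def)
qed

lemma cnt_ls: assumes k: "k \<in> {1..K}" shows "cnt (ls k) = k"
proof -
  have "{k'\<in>{1..K}. ls k' \<le> ls k} = {1..k}" using ls_le[OF _ k] k by auto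
  thus ?thesis by (simp add: cnt_def)
qed

lemma cnt_L: "cnt L = K"
proof -
  have "{k'\<in>{1..K}. ls k' \<le> L} = {1..K}" using ls_range by auto
  thus ?thesis by (simp add: cnt_def)
qed

lemma cnt_mono: "l \<le> l' \<Longrightarrow> cnt l \<le> cnt l'"
  unfolding cnt_def by (rule card_mono) auto

lemma cnt_suc_nonmp: "Suc l \<notin> ls ` {1..K} \<Longrightarrow> cnt (Suc l) = cnt l"
proof -
  assume h: "Suc l \<notin> ls ` {1..K}"
  have "{k\<in>{1..K}. ls k \<le> Suc l} = {k\<in>{1..K}. ls k \<le> l}"
    using h by (force simp: le_Suc_eq)
  thus ?thesis by (simp add: cnt_def)
qed

lemma cnt_suc_mp: "k \<in> {1..K} \<Longrightarrow> Suc l = ls k \<Longrightarrow> cnt (Suc l) = Suc (cnt l) \<and> cnt l = k - 1"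
proof -
  assume k: "k \<in> {1..K}" and e: "Suc l = ls k"
  have "l = ls k - 1" using e by simp
  thus ?thesis using cnt_ls[OF k] cnt_ls_pred[OF k] e k by auto
qed

lemma step_all:
  assumes "Suc l \<le> L" "j \<ge> 2" "\<forall>u\<in>nbhd gE j. H x l u = H x' l u"
  shows "H x (Suc l) j = H x' (Suc l) j"
proof -
  have j: "j \<in> nbhd gE j" by (simp add: nbhd_iff)
  have eq: "mlp_apply (agg \<theta> (Suc l)) (H x l u @ [ef (gw x) u j]) =
            mlp_apply (agg \<theta> (Suc l)) (H x' l u @ [ef (gw x') u j])" if "u \<in> nbhd gE j" for u
    using assms(3) that ef_indep[of u j x x'] assms(2) by simp
  have "cmin d (nbhd gE j) (\<lambda>u. mlp_apply (agg \<theta> (Suc l)) (H x l u @ [ef (gw x) u j])) =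
        cmin d (nbhd gE j) (\<lambda>u. mlp_apply (agg \<theta> (Suc l)) (H x' l u @ [ef (gw x') u j]))"
    unfolding cmin_def using eq by (metis (no_types, lifting) image_cong)
  thus ?thesis unfolding H_Suc using assms(3) j by simp
qed

lemma step_nonmp:
  assumes sl: "Suc l \<le> L" and nmp: "\<not> message_passing d L \<theta> (Suc l)" and j2: "j \<ge> 2"
    and x: "0 \<le> x" and x': "0 \<le> x'" and hj: "H x l j = H x' l j"
  shows "H x (Suc l) j = H x' (Suc l) j"
proof -
  have eq: "mlp_apply (agg \<theta> (Suc l)) (H x l u @ [ef (gw x) u j]) =
            mlp_apply (agg \<theta> (Suc l)) (H x' l u @ [ef (gw x') u j])" if u: "u \<in> nbhd gE j" for u
  proof -
    have "ef (gw x) u j = ef (gw x') u j" using ef_indep[of u j x x'] j2 by simp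
    moreover have "mlp_apply (agg \<theta> (Suc l)) (H x l u @ [ef (gw x) u j]) =
            mlp_apply (agg \<theta> (Suc l)) (H x' l u @ [ef (gw x) u j])"
      using nonmp_agg[of "Suc l" "H x l u" "H x' l u" "ef (gw x) u j"] sl nmp
        H_len[of l x u] H_len[of l x' u] H_nonneg[OF x, of l _ u] H_nonneg[OF x', of l _ u]
        ef_nonneg[OF x, of u j] u by simp
    ultimately show ?thesis by simp
  qed
  have "cmin d (nbhd gE j) (\<lambda>u. mlp_apply (agg \<theta> (Suc l)) (H x l u @ [ef (gw x) u j])) =
        cmin d (nbhd gE j) (\<lambda>u. mlp_apply (agg \<theta> (Suc l)) (H x' l u @ [ef (gw x') u j]))"
    unfolding cmin_def using eq by (metis (no_types, lifting) image_cong)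
  thus ?thesis unfolding H_Suc using hj by simp
qed

lemma P: "0 \<le> x \<Longrightarrow> 0 \<le> x' \<Longrightarrow> l \<le> L \<Longrightarrow> cnt l + 2 \<le> j \<Longrightarrow> H x l j = H x' l j"
proof (induction l arbitrary: j)
  case 0 thus ?case by (simp add: H_0 gf_big)
next
  case (Suc l)
  have jl: "cnt l + 2 \<le> j" using cnt_mono[of l "Suc l"] Suc.prems by simp
  show ?case
  proof (cases "Suc l \<in> ls ` {1..K}")
    case True
    then obtain k where k: "k \<in> {1..K}" "Suc l = ls k" by blast
    have c: "cnt (Suc l) = Suc (cnt l)" using cnt_suc_mp[OF k] by simp
    show ?thesis
    proof (rule step_all)
      show "Suc l \<le> L" "2 \<le> j" using Suc.prems by auto
      show "\<forall>u\<in>nbhd gE j. H x l u = H x' l u"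
      proof
        fix u assume "u \<in> nbhd gE j"
        hence "cnt l + 2 \<le> u" using Suc.prems c by (auto simp: nbhd_iff)
        thus "H x l u = H x' l u" using Suc by simp
      qed
    qed
  next
    case False
    have "\<not> message_passing d L \<theta> (Suc l)" using False mp_iff[of "Suc l"] Suc.prems by simp
    thus ?thesis using step_nonmp[of l j x x'] Suc jl by simp
  qed
qed

end

context gsetup begin

definition "fails x k = (H x (ls k) (Suc k) \<noteq> mlp_apply (upd \<theta> (ls k))
   (mlp_apply (agg \<theta> (ls k)) (H x (ls k - 1) k @ [ef (gw x) k (Suc k)]) @ H x (ls k - 1) (Suc k)))"

lemma pd_iff: "path_derived \<theta> d K ls (path_E K) (path_w (a(1 := x))) (path_feat \<beta> K (a(1 := x)))
   \<longleftrightarrow> (\<forall>k\<in>{1..K}. \<not> fails x k)"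
  by (simp add: path_derived_def fails_def H_def gE_def gw_def gf_def)

lemma claimA:
  assumes x: "0 \<le> x" and x': "0 \<le> x'" and k: "k \<in> {1..K}" and fx: "fails x k" and fx': "fails x' k"
  shows "H x (ls k) (Suc k) = H x' (ls k) (Suc k)"
proof -
  define l0 where "l0 = ls k - 1"
  have lsk: "ls k = Suc l0" and l0L: "Suc l0 \<le> L" and l0L': "l0 \<le> L" using ls_range[OF k] by (auto simp: l0_def)
  have mp: "message_passing d L \<theta> (Suc l0)" using ls_range[OF k] lsk by simp
  define U where "U = upd \<theta> (Suc l0)"
  have wa: "mlp_wf (dim L d l0 + 1) d (agg \<theta> (Suc l0))" and wu: "mlp_wf (d + dim L d l0) (dim L d (Suc l0)) U"
    and lu: "length U = m"
    using wf_at[of "Suc l0"] l0L by (auto simp: U_def)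
  have one: "one_nonzero (fst (hd U))" using oda mp l0L by (auto simp: one_dim_aggregation_def U_def)
  have une: "U \<noteq> []" using lu m1 by auto
  obtain c where c: "c < d + dim L d l0" and cc: "\<forall>v v'. length v = d + dim L d l0 \<longrightarrow>
      length v' = d + dim L d l0 \<longrightarrow> v!c = v'!c \<longrightarrow> mlp_apply U v = mlp_apply U v'"
    using mlp_onecoord_ex[OF one wu une] by blast
  define R where "R = nbhd gE (Suc k) - {k}"
  have Rfin: "finite R" using nbhd_fin by (simp add: R_def)
  have Rne: "R \<noteq> {}" using k unfolding R_def by (auto simp: nbhd_iff)
  have nb: "nbhd gE (Suc k) = insert k R" using k unfolding R_def by (auto simp: nbhd_iff)
  have Rge: "\<forall>u\<in>R. Suc k \<le> u" unfolding R_def by (auto simp: nbhd_iff)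
  define Fy where "Fy = (\<lambda>y u. mlp_apply (agg \<theta> (Suc l0)) (H y l0 u @ [ef (gw y) u (Suc k)]))"
  define Cy where "Cy y = cmin d (nbhd gE (Suc k)) (Fy y)" for y
  have Hs: "H y (ls k) (Suc k) = mlp_apply U (Cy y @ H y l0 (Suc k))" for y
    by (simp add: lsk H_Suc Fy_def Cy_def U_def)
  have lenh: "length (H y l0 u) = dim L d l0" for y u using H_len[OF l0L'] .
  have lenF: "length (Fy y u) = d" for y u
    unfolding Fy_def by (rule mlp_len[OF wa]) (simp add: lenh)
  have key: "c < d \<and> Cy y ! c = Min ((\<lambda>u. Fy y u ! c) ` R)" if y: "fails y k" for y
  proof -
    have fl: "H y (ls k) (Suc k) \<noteq> mlp_apply U (Fy y k @ H y l0 (Suc k))"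
      using y by (simp add: fails_def lsk Fy_def U_def)
    have ne: "(Cy y @ H y l0 (Suc k)) ! c \<noteq> (Fy y k @ H y l0 (Suc k)) ! c"
    proof
      assume "(Cy y @ H y l0 (Suc k)) ! c = (Fy y k @ H y l0 (Suc k)) ! c"
      hence "mlp_apply U (Cy y @ H y l0 (Suc k)) = mlp_apply U (Fy y k @ H y l0 (Suc k))"
        using cc lenh lenF by (simp add: Cy_def)
      thus False using fl Hs by simp
    qed
    have cd: "c < d"
    proof (rule ccontr)
      assume "\<not> c < d"
      hence "(Cy y @ H y l0 (Suc k)) ! c = (Fy y k @ H y l0 (Suc k)) ! c"
        using lenF by (simp add: nth_append Cy_def)
      thus False using ne by simp
    qed
    have ne2: "Cy y ! c \<noteq> Fy y k ! c" using ne cd lenF by (simp add: nth_append Cy_def)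
    have "Cy y ! c = Min ((\<lambda>u. Fy y u ! c) ` nbhd gE (Suc k))"
      using cd by (simp add: Cy_def cmin_def)
    also have "\<dots> = min (Fy y k ! c) (Min ((\<lambda>u. Fy y u ! c) ` R))"
      using Rfin Rne by (simp add: nb)
    finally have "Cy y ! c = min (Fy y k ! c) (Min ((\<lambda>u. Fy y u ! c) ` R))" .
    hence "Cy y ! c = Min ((\<lambda>u. Fy y u ! c) ` R)" using ne2 by (auto simp: min_def split: if_splits)
    thus ?thesis using cd by simp
  qed
  have cl0: "cnt l0 = k - 1" using cnt_ls_pred[OF k] by (simp add: l0_def)
  have FR: "Fy x u = Fy x' u" if u: "u \<in> R" for u
  proof -
    have "Suc k \<le> u" using Rge u by blast
    hence "cnt l0 + 2 \<le> u" using cl0 k by simp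
    hence "H x l0 u = H x' l0 u" using P[OF x x' l0L'] by simp
    moreover have "ef (gw x) u (Suc k) = ef (gw x') u (Suc k)" by (rule ef_indep) (use k in auto)
    ultimately show ?thesis by (simp add: Fy_def)
  qed
  have "(\<lambda>u. Fy x u ! c) ` R = (\<lambda>u. Fy x' u ! c) ` R"
    by (rule image_cong) (simp_all add: FR)
  hence "Min ((\<lambda>u. Fy x u ! c) ` R) = Min ((\<lambda>u. Fy x' u ! c) ` R)" by simp
  hence cxc: "Cy x ! c = Cy x' ! c" and cd: "c < d" using key[OF fx] key[OF fx'] by auto
  have "mlp_apply U (Cy x @ H x l0 (Suc k)) = mlp_apply U (Cy x' @ H x' l0 (Suc k))"
    using cc cxc cd lenh by (simp add: Cy_def nth_append)
  thus ?thesis using Hs by simp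
qed

lemma Q:
  assumes x: "0 \<le> x" and x': "0 \<le> x'" and k: "k \<in> {1..K}" and fx: "fails x k" and fx': "fails x' k"
    and later: "\<forall>k'\<in>{1..K}. k < k' \<longrightarrow> \<not> fails x k' \<and> \<not> fails x' k'"
  shows "ls k \<le> l \<Longrightarrow> l \<le> L \<Longrightarrow> cnt l + 1 \<le> j \<Longrightarrow> H x l j = H x' l j"
proof (induction l arbitrary: j)
  case 0 thus ?case using ls_range[OF k] by simp
next
  case (Suc l)
  show ?case
  proof (cases "cnt (Suc l) + 2 \<le> j")
    case True thus ?thesis using P[OF x x' Suc.prems(2)] by simp
  next
    case False
    hence j: "j = Suc (cnt (Suc l))" using Suc.prems(3) by simp
    show ?thesis
    proof (cases "Suc l = ls k")
      case True
      hence "j = Suc k" using j cnt_ls[OF k] by simp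
      thus ?thesis using claimA[OF x x' k fx fx'] True by simp
    next
      case False
      hence lk: "ls k \<le> l" using Suc.prems(1) by simp
      have ck: "k \<le> cnt l" using cnt_mono[OF lk] cnt_ls[OF k] by simp
      have lL: "l \<le> L" using Suc.prems(2) by simp
      show ?thesis
      proof (cases "Suc l \<in> ls ` {1..K}")
        case True
        then obtain k' where k': "k' \<in> {1..K}" "Suc l = ls k'" by blast
        have kk: "k < k'" using ls_less[OF k k'(1)] lk k' by simp
        have cs: "cnt (Suc l) = Suc (cnt l)" "cnt l = k' - 1" using cnt_suc_mp[OF k'] by auto
        hence jk: "j = Suc k'" using j k' by simp
        have nf: "\<not> fails x k'" "\<not> fails x' k'" using later k' kk by auto
        have e1: "H y (Suc l) (Suc k') = mlp_apply (upd \<theta> (Suc l))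
           (mlp_apply (agg \<theta> (Suc l)) (H y l k' @ [ef (gw y) k' (Suc k')]) @ H y l (Suc k'))"
          if "\<not> fails y k'" for y
          using that unfolding fails_def k'(2)[symmetric] by simp
        have "H x l k' = H x' l k'" "H x l (Suc k') = H x' l (Suc k')"
          using Suc.IH[OF lk lL] cs k' by auto
        moreover have "ef (gw x) k' (Suc k') = ef (gw x') k' (Suc k')"
          using ef_indep[of k' "Suc k'"] k' by simp
        ultimately show ?thesis using e1[OF nf(1)] e1[OF nf(2)] jk by simp
      next
        case False
        have nmp: "\<not> message_passing d L \<theta> (Suc l)" using False mp_iff[of "Suc l"] Suc.prems by simp
        have c: "cnt (Suc l) = cnt l" using cnt_suc_nonmp[OF False] .
        have "H x l j = H x' l j" using Suc.IH[OF lk lL] j c by simp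
        moreover have "j \<ge> 2" using j c ck k by simp
        ultimately show ?thesis using step_nonmp[OF Suc.prems(2) nmp _ x x'] by simp
      qed
    qed
  qed
qed

definition "lastf x = Max {k\<in>{1..K}. fails x k}"

lemma lastf_props:
  assumes "\<exists>k\<in>{1..K}. fails x k"
  shows "lastf x \<in> {1..K} \<and> fails x (lastf x) \<and> (\<forall>k'\<in>{1..K}. lastf x < k' \<longrightarrow> \<not> fails x k')"
proof -
  have fin: "finite {k\<in>{1..K}. fails x k}" by simp
  have ne: "{k\<in>{1..K}. fails x k} \<noteq> {}" using assms by auto
  have "lastf x \<in> {k\<in>{1..K}. fails x k}" unfolding lastf_def using Max_in[OF fin ne] .
  moreover have "\<forall>k'\<in>{1..K}. fails x k' \<longrightarrow> k' \<le> lastf x" unfolding lastf_def using Max_ge[OF fin] by auto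
  ultimately show ?thesis by auto
qed

lemma same_out:
  assumes x: "0 \<le> x" and x': "0 \<le> x'" and ex: "\<exists>k\<in>{1..K}. fails x k" and ex': "\<exists>k\<in>{1..K}. fails x' k"
    and eq: "lastf x = lastf x'"
  shows "H x L (Suc K) = H x' L (Suc K)"
proof -
  note p = lastf_props[OF ex] and p' = lastf_props[OF ex']
  have "ls (lastf x) \<le> L" using ls_range p by auto
  thus ?thesis using Q[OF x x', of "lastf x" L "Suc K"] p p' eq cnt_L by auto
qed

end

lemma card_factor:
  assumes "\<forall>x\<in>D. g x \<in> {1..(K::nat)}" "\<forall>x\<in>D. \<forall>y\<in>D. g x = g y \<longrightarrow> f x = f y"
  shows "finite (f ` D) \<and> card (f ` D) \<le> K"
proof -
  define h where "h k = f (SOME x. x \<in> D \<and> g x = k)" for k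
  have sub: "f ` D \<subseteq> h ` {1..K}"
  proof
    fix z assume "z \<in> f ` D"
    then obtain x where x: "x \<in> D" "z = f x" by blast
    let ?y = "SOME y. y \<in> D \<and> g y = g x"
    have "?y \<in> D \<and> g ?y = g x" by (rule someI[of "\<lambda>y. y \<in> D \<and> g y = g x" x]) (use x in simp)
    hence "f ?y = f x" using assms(2) x(1) by blast
    hence "h (g x) = f x" unfolding h_def .
    thus "z \<in> h ` {1..K}" using x assms(1) by (metis image_eqI)
  qed
  have "card (f ` D) \<le> card (h ` {1..K})" using sub by (intro card_mono) auto
  also have "\<dots> \<le> card {1..K}" by (rule card_image_le) simp
  moreover have "finite (f ` D)" using sub by (meson finite_imageI finite_atLeastAtMost finite_subset)
  ultimately show ?thesis by simp
qed

theorem mainTheorem12: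
  fixes K L m d :: nat and \<beta> :: real and a :: "nat \<Rightarrow> real" and \<theta> :: gnn
    and ls :: "nat \<Rightarrow> nat"
  assumes "K \<ge> 1" and "\<beta> > 0" and "m \<ge> 1"
    and "\<forall>i \<in> {2..K+1}. a i \<ge> 0"
    and "gnn_wf m d L \<theta>"
    and "strict_mono_on {1..K} ls"
    and "ls ` {1..K} = {l \<in> {1..L}. message_passing d L \<theta> l}"
    and "one_dim_aggregation d L \<theta>"
  defines "Y \<equiv> {hid \<theta> d (path_E K) (path_w (a(1 := x))) (path_feat \<beta> K (a(1 := x))) L (K + 1) | x.
      x \<ge> 0 \<and>
      \<not> path_derived \<theta> d K ls (path_E K) (path_w (a(1 := x))) (path_feat \<beta> K (a(1 := x)))}"
  shows "finite Y \<and> card Y \<le> K"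
proof -
  have loc: "gsetup K L m d \<beta> a \<theta> ls" unfolding gsetup_def using assms(1-8) by blast
  interpret G: gsetup K L m d \<beta> a \<theta> ls by (rule loc)
  define D where "D = {x. 0 \<le> x \<and> (\<exists>k\<in>{1..K}. G.fails x k)}"
  have Y: "Y = (\<lambda>x. G.H x L (Suc K)) ` D"
    unfolding Y_def D_def G.pd_iff G.H_def G.gE_def G.gw_def G.gf_def by (auto simp: image_def)
  show ?thesis unfolding Y
  proof (rule card_factor[where g = G.lastf])
    show "\<forall>x\<in>D. G.lastf x \<in> {1..K}" using G.lastf_props by (auto simp: D_def)
    show "\<forall>x\<in>D. \<forall>y\<in>D. G.lastf x = G.lastf y \<longrightarrow> G.H x L (Suc K) = G.H y L (Suc K)"
      using G.same_out by (auto simp: D_def)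
  qed
qed

end
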